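(* Assume $\mathfrak g$ is semisimple. Let $w\in W$ and let $\Omega$ be a prime ideal of $\mathcal S$ such that $w.\Omega$ is prime and both $P^+\cap\mathcal V(\Omega)$ and $P^+\cap\mathcal V(w.\Omega)$ are nonempty. Then $w\in W^\lambda$, where $\lambda=\lambda_\Omega$.
   Context: $F$ is an algebraically closed field of characteristic zero; $\mathfrak g$ is a semisimple Lie algebra over $F$ with Cartan subalgebra $\mathfrak h$, root system $R$, positive system $R^+$, Weyl group $W$, $\rho=\frac12\sum_{\alpha\in R^+}\alpha$, dot action $w.\xi=w(\xi+\rho)-\rho$; $H_\alpha\in\mathfrak h$ is the coroot of $\alpha$. $\mathcal S=S(\mathfrak h)$ is identified with polynomial functions on $\mathfrak h^*$, with $(w.f)(\xi)=f(w^{-1}.\xi)$ and $w.\Omega=\{w.f:f\in\Omega\}$; $\mathcal V(\Omega)$ is the zero set. For a prime $\Omega$, $\mathbb F$ is the fraction field of $\mathcal S/\Omega$ and $\lambda_\Omega$ the $\mathbb F$-linear extension of $\mathfrak h\hookrightarrow\mathcal S\to\mathcal S/\Omega\hookrightarrow\mathbb F$. $P^+$ is the set of dominant integral weights (those $\mu$ with $\dim L(\mu)<\infty$). For $\lambda=\lambda_\Omega$: $R_\lambda=\{\alpha\in R: H_\alpha-n\in\Omega\text{ for some }n\in\mathbb Z\}$, $R^+_\lambda=R^+\cap R_\lambda$, $B_\lambda$ the simple roots of $R_\lambda$ in $R^+_\lambda$, $W^\lambda=\{w\in W:w(B_\lambda)\subseteq R^+\}$. *)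

theory Defs
  imports "HOL-Analysis.Analysis" "HOL-Computational_Algebra.Polynomial"
begin

(* h^* is modelled as 'f^'n (coordinates w.r.t. a basis), h as 'f^'n via the
   perfect pairing below: an element H of h acts on xi in h^* as  xi(H). *)

definition pairing :: "'f::comm_ring_1 ^ 'n \<Rightarrow> 'f ^ 'n \<Rightarrow> 'f" where
  "pairing xi H = (\<Sum>i\<in>UNIV. xi $ i * H $ i)"

definition algebraically_closed :: "'f::field itself \<Rightarrow> bool" where
  "algebraically_closed _ \<longleftrightarrow> (\<forall>p :: 'f poly. degree p > 0 \<longrightarrow> (\<exists>x. poly p x = 0))"

(* The root system R \<subseteq> h^* of a semisimple Lie algebra together with the coroot map
   alpha \<mapsto> H_alpha: a finite reduced crystallographic root system spanning h^*. *)
definition root_system :: "('f::field ^ 'n) set \<Rightarrow> ('f ^ 'n \<Rightarrow> 'f ^ 'n) \<Rightarrow> bool" where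
  "root_system R H \<longleftrightarrow>
     finite R \<and> 0 \<notin> R \<and>
     (\<forall>xi. \<exists>c. xi = (\<Sum>\<alpha>\<in>R. c \<alpha> *s \<alpha>)) \<and>
     (\<forall>\<alpha>\<in>R. pairing \<alpha> (H \<alpha>) = 2) \<and>
     (\<forall>\<alpha>\<in>R. \<forall>\<beta>\<in>R. \<beta> - pairing \<beta> (H \<alpha>) *s \<alpha> \<in> R) \<and>
     (\<forall>\<alpha>\<in>R. \<forall>\<beta>\<in>R. \<exists>k::int. pairing \<beta> (H \<alpha>) = of_int k) \<and>
     (\<forall>\<alpha>\<in>R. \<forall>c. c *s \<alpha> \<in> R \<longrightarrow> c = 1 \<or> c = -1)"

definition positive_system :: "('f::field ^ 'n) set \<Rightarrow> ('f ^ 'n) set \<Rightarrow> bool" where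
  "positive_system R Rp \<longleftrightarrow>
     (\<exists>\<Delta>\<subseteq>R.
        (\<forall>c. (\<Sum>\<delta>\<in>\<Delta>. c \<delta> *s \<delta>) = 0 \<longrightarrow> (\<forall>\<delta>\<in>\<Delta>. c \<delta> = 0)) \<and>
        (\<forall>\<alpha>\<in>R. \<exists>c :: 'f ^ 'n \<Rightarrow> nat.
            \<alpha> = (\<Sum>\<delta>\<in>\<Delta>. of_nat (c \<delta>) *s \<delta>) \<or> \<alpha> = - (\<Sum>\<delta>\<in>\<Delta>. of_nat (c \<delta>) *s \<delta>)) \<and>
        Rp = {\<alpha>\<in>R. \<exists>c :: 'f ^ 'n \<Rightarrow> nat. \<alpha> = (\<Sum>\<delta>\<in>\<Delta>. of_nat (c \<delta>) *s \<delta>)})"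

definition reflection :: "('f::field ^ 'n \<Rightarrow> 'f ^ 'n) \<Rightarrow> 'f ^ 'n \<Rightarrow> 'f ^ 'n \<Rightarrow> 'f ^ 'n" where
  "reflection H \<alpha> xi = xi - pairing xi (H \<alpha>) *s \<alpha>"

inductive_set weyl_group :: "('f::field ^ 'n) set \<Rightarrow> ('f ^ 'n \<Rightarrow> 'f ^ 'n) \<Rightarrow> ('f ^ 'n \<Rightarrow> 'f ^ 'n) set"
  for R H where
  weyl_id: "id \<in> weyl_group R H"
| weyl_step: "w \<in> weyl_group R H \<Longrightarrow> \<alpha> \<in> R \<Longrightarrow> reflection H \<alpha> \<circ> w \<in> weyl_group R H"

definition rho :: "('f::field ^ 'n) set \<Rightarrow> 'f ^ 'n" where
  "rho Rp = inverse 2 *s (\<Sum>\<alpha>\<in>Rp. \<alpha>)"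

definition dot :: "('f::field ^ 'n) set \<Rightarrow> ('f ^ 'n \<Rightarrow> 'f ^ 'n) \<Rightarrow> 'f ^ 'n \<Rightarrow> 'f ^ 'n" where
  "dot Rp w xi = w (xi + rho Rp) - rho Rp"

(* S = S(h), identified with the polynomial functions on h^* *)
inductive_set polyfun :: "('f::field ^ 'n \<Rightarrow> 'f) set" where
  pf_const: "(\<lambda>_. c) \<in> polyfun"
| pf_lin: "(\<lambda>xi. pairing xi H) \<in> polyfun"
| pf_add: "f \<in> polyfun \<Longrightarrow> g \<in> polyfun \<Longrightarrow> (\<lambda>xi. f xi + g xi) \<in> polyfun"
| pf_mult: "f \<in> polyfun \<Longrightarrow> g \<in> polyfun \<Longrightarrow> (\<lambda>xi. f xi * g xi) \<in> polyfun"

definition dot_fun :: "('f::field ^ 'n) set \<Rightarrow> ('f ^ 'n \<Rightarrow> 'f ^ 'n) \<Rightarrow> ('f ^ 'n \<Rightarrow> 'f) \<Rightarrow> ('f ^ 'n \<Rightarrow> 'f)" where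
  "dot_fun Rp w f = (\<lambda>xi. f (dot Rp (inv w) xi))"

definition dot_set :: "('f::field ^ 'n) set \<Rightarrow> ('f ^ 'n \<Rightarrow> 'f ^ 'n) \<Rightarrow> ('f ^ 'n \<Rightarrow> 'f) set \<Rightarrow> ('f ^ 'n \<Rightarrow> 'f) set" where
  "dot_set Rp w \<Omega> = dot_fun Rp w ` \<Omega>"

definition prime_ideal_S :: "('f::field ^ 'n \<Rightarrow> 'f) set \<Rightarrow> bool" where
  "prime_ideal_S \<Omega> \<longleftrightarrow>
     \<Omega> \<subseteq> polyfun \<and> (\<lambda>_. 0) \<in> \<Omega> \<and>
     (\<forall>f\<in>\<Omega>. \<forall>g\<in>\<Omega>. (\<lambda>xi. f xi + g xi) \<in> \<Omega>) \<and>
     (\<forall>f\<in>\<Omega>. \<forall>g\<in>polyfun. (\<lambda>xi. g xi * f xi) \<in> \<Omega>) \<and>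
     \<Omega> \<noteq> polyfun \<and>
     (\<forall>f\<in>polyfun. \<forall>g\<in>polyfun. (\<lambda>xi. f xi * g xi) \<in> \<Omega> \<longrightarrow> f \<in> \<Omega> \<or> g \<in> \<Omega>)"

definition zero_set :: "('f::field ^ 'n \<Rightarrow> 'f) set \<Rightarrow> ('f ^ 'n) set" where
  "zero_set \<Omega> = {xi. \<forall>f\<in>\<Omega>. f xi = 0}"

definition dominant_integral :: "('f::field ^ 'n) set \<Rightarrow> ('f ^ 'n \<Rightarrow> 'f ^ 'n) \<Rightarrow> ('f ^ 'n) set" where
  "dominant_integral Rp H = {\<mu>. \<forall>\<alpha>\<in>Rp. \<exists>k::nat. pairing \<mu> (H \<alpha>) = of_nat k}"

(* R_lambda for lambda = lambda_Omega:  alpha with H_alpha - n \<in> Omega for some integer n *)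
definition integral_roots :: "('f::field ^ 'n) set \<Rightarrow> ('f ^ 'n \<Rightarrow> 'f ^ 'n) \<Rightarrow> ('f ^ 'n \<Rightarrow> 'f) set \<Rightarrow> ('f ^ 'n) set" where
  "integral_roots R H \<Omega> = {\<alpha>\<in>R. \<exists>n::int. (\<lambda>xi. pairing xi (H \<alpha>) - of_int n) \<in> \<Omega>}"

definition simple_roots :: "('f::field ^ 'n) set \<Rightarrow> ('f ^ 'n) set" where
  "simple_roots P = {\<alpha>\<in>P. \<not> (\<exists>\<beta>\<in>P. \<exists>\<gamma>\<in>P. \<alpha> = \<beta> + \<gamma>)}"

definition B_lambda :: "('f::field ^ 'n) set \<Rightarrow> ('f ^ 'n) set \<Rightarrow> ('f ^ 'n \<Rightarrow> 'f ^ 'n) \<Rightarrow> ('f ^ 'n \<Rightarrow> 'f) set \<Rightarrow> ('f ^ 'n) set" where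
  "B_lambda R Rp H \<Omega> = simple_roots (Rp \<inter> integral_roots R H \<Omega>)"

definition W_lambda :: "('f::field ^ 'n) set \<Rightarrow> ('f ^ 'n) set \<Rightarrow> ('f ^ 'n \<Rightarrow> 'f ^ 'n) \<Rightarrow> ('f ^ 'n \<Rightarrow> 'f) set \<Rightarrow> ('f ^ 'n \<Rightarrow> 'f ^ 'n) set" where
  "W_lambda R Rp H \<Omega> = {w \<in> weyl_group R H. w ` B_lambda R Rp H \<Omega> \<subseteq> Rp}"

end

theory Submission
  imports Defs
begin


lemma pairing_add_left: "pairing (x + y) h = pairing x h + pairing y h"
  by (simp add: pairing_def distrib_right sum.distrib)
lemma pairing_diff_left: "pairing (x - y) h = pairing x h - pairing y h"
  by (simp add: pairing_def left_diff_distrib sum_subtractf)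
lemma pairing_neg_left: "pairing (- x) h = - pairing x h"
  by (simp add: pairing_def sum_negf)
lemma pairing_scale_left: "pairing (c *s x) h = c * pairing x h"
  by (simp add: pairing_def sum_distrib_left mult.assoc)
lemma pairing_diff_right: "pairing x (a - b) = pairing x a - pairing x b"
  by (simp add: pairing_def right_diff_distrib sum_subtractf)
lemma pairing_scale_right: "pairing x (c *s h) = c * pairing x h"
  by (simp add: pairing_def sum_distrib_left mult.left_commute)
lemma pairing_zero_left: "pairing 0 h = 0"
  by (simp add: pairing_def)
lemma pairing_sum_left: "pairing (\<Sum>a\<in>A. f a) h = (\<Sum>a\<in>A. pairing (f a) h)"
  unfolding pairing_def by (simp add: sum_distrib_right sum.swap[of _ UNIV A])

lemma sum_smult_left: "(\<Sum>x\<in>A. f x) *s (v::'a::comm_ring_1^'n) = (\<Sum>x\<in>A. f x *s v)"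
  by (simp add: vec_eq_iff sum_distrib_right)

lemma smult_cancel:
  fixes a :: "'f::field ^ 'n"
  assumes "a \<noteq> 0" "c *s a = d *s a" shows "c = d"
proof -
  obtain i where "a $ i \<noteq> 0" using assms(1) by (auto simp: vec_eq_iff)
  moreover have "c * a $ i = d * a $ i" using assms(2) by (metis vector_smult_component)
  ultimately show ?thesis by simp
qed

lemma refl_unique:
  fixes a \<phi> \<psi> :: "'f::field_char_0 ^ 'n"
  assumes fin: "finite R" and span: "\<forall>\<xi>. \<exists>c. \<xi> = (\<Sum>\<alpha>\<in>R. c \<alpha> *s \<alpha>)"
    and a0: "a \<noteq> 0" and p1: "pairing a \<phi> = 2" and p2: "pairing a \<psi> = 2"
    and r1: "\<forall>\<gamma>\<in>R. \<gamma> - pairing \<gamma> \<phi> *s a \<in> R"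
    and r2: "\<forall>\<gamma>\<in>R. \<gamma> - pairing \<gamma> \<psi> *s a \<in> R"
  shows "pairing \<xi> \<phi> = pairing \<xi> \<psi>"
proof -
  define f where "f x = pairing x \<psi> - pairing x \<phi>" for x
  have fa: "f a = 0" using p1 p2 by (simp add: f_def)
  have f0: "f \<gamma> = 0" if g: "\<gamma> \<in> R" for \<gamma>
  proof (rule ccontr)
    assume nz: "f \<gamma> \<noteq> 0"
    define g where "g j = \<gamma> + (of_nat j * f \<gamma>) *s a" for j :: nat
    have gR: "g j \<in> R" for j
    proof (induction j)
      case 0 then show ?case using g by (simp add: g_def)
    next
      case (Suc j)
      define x where "x = g j"
      have xR: "x \<in> R" using Suc x_def by simp
      define y where "y = x - pairing x \<psi> *s a"
      have yR: "y \<in> R" using r2 xR y_def by simp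
      define z where "z = y - pairing y \<phi> *s a"
      have zR: "z \<in> R" using r1 yR z_def by simp
      have fx: "f x = f \<gamma>"
        using fa unfolding x_def g_def f_def
        by (simp only: pairing_add_left pairing_scale_left) (simp add: algebra_simps)
      have py: "pairing y \<phi> = pairing x \<phi> - pairing x \<psi> * 2"
        unfolding y_def by (simp add: pairing_diff_left pairing_scale_left p1)
      have "z = x + f x *s a"
        unfolding z_def py unfolding y_def f_def by (simp add: vec_eq_iff algebra_simps)
      also have "\<dots> = g (Suc j)" unfolding fx unfolding x_def g_def by (simp add: vec_eq_iff algebra_simps)
      finally show ?case using zR by simp
    qed
    have "inj g"
    proof (rule injI)
      fix j k assume "g j = g k"
      then have "(of_nat j * f \<gamma>) *s a = (of_nat k * f \<gamma>) *s a" by (simp add: g_def)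
      then have "of_nat j * f \<gamma> = (of_nat k * f \<gamma> :: 'f)" using smult_cancel a0 by blast
      then show "j = k" using nz by simp
    qed
    moreover have "finite (range g)" using gR fin by (meson finite_subset image_subsetI)
    ultimately show False using finite_imageD by (metis infinite_UNIV_nat)
  qed
  obtain c where c: "\<xi> = (\<Sum>\<alpha>\<in>R. c \<alpha> *s \<alpha>)" using span by blast
  have "f \<xi> = (\<Sum>\<alpha>\<in>R. c \<alpha> * f \<alpha>)"
    unfolding c f_def by (simp add: pairing_sum_left pairing_scale_left sum_subtractf right_diff_distrib)
  also have "\<dots> = 0" using f0 by simp
  finally show ?thesis by (simp add: f_def)
qed



lemma refl_pairing: "pairing (reflection H \<beta> x) h = pairing x h - pairing x (H \<beta>) * pairing \<beta> h"
  by (simp add: reflection_def pairing_diff_left pairing_scale_left)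

lemma refl_inv:
  assumes "pairing \<gamma> (H \<gamma>) = 2"
  shows "reflection H \<gamma> (reflection H \<gamma> x) = x"
proof -
  have "pairing (reflection H \<gamma> x) (H \<gamma>) = - pairing x (H \<gamma>)"
    using assms by (simp add: refl_pairing)
  then show ?thesis by (simp add: reflection_def vec_eq_iff algebra_simps)
qed

lemma refl_inv_rs: "root_system R H \<Longrightarrow> \<beta> \<in> R \<Longrightarrow> reflection H \<beta> (reflection H \<beta> x) = x"
  by (rule refl_inv) (simp add: root_system_def)

lemma refl_lin: "reflection H \<beta> (u - p *s v) = reflection H \<beta> u - p *s reflection H \<beta> v"
  by (simp add: reflection_def pairing_diff_left pairing_scale_left vec_eq_iff algebra_simps)

lemma refl_mem: "root_system R H \<Longrightarrow> \<alpha> \<in> R \<Longrightarrow> \<beta> \<in> R \<Longrightarrow> reflection H \<alpha> \<beta> \<in> R"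
  unfolding root_system_def reflection_def by blast

lemma rs_two: "root_system R H \<Longrightarrow> \<alpha> \<in> R \<Longrightarrow> pairing \<alpha> (H \<alpha>) = 2"
  unfolding root_system_def by blast

lemma coroot_refl:
  fixes R :: "('f::field_char_0 ^ 'n) set"
  assumes rs: "root_system R H" and aR: "\<alpha> \<in> R" and bR: "\<beta> \<in> R"
  shows "pairing \<xi> (H (reflection H \<beta> \<alpha>)) = pairing (reflection H \<beta> \<xi>) (H \<alpha>)"
proof -
  define a where "a = reflection H \<beta> \<alpha>"
  define \<psi> where "\<psi> = H \<alpha> - pairing \<beta> (H \<alpha>) *s H \<beta>"
  have psi: "pairing x \<psi> = pairing (reflection H \<beta> x) (H \<alpha>)" for x
    unfolding \<psi>_def by (simp add: refl_pairing pairing_diff_right pairing_scale_right algebra_simps)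
  have aRR: "a \<in> R" unfolding a_def using refl_mem[OF rs bR aR] .
  have fin: "finite R" and span: "\<forall>\<xi>. \<exists>c. \<xi> = (\<Sum>\<alpha>\<in>R. c \<alpha> *s \<alpha>)" and z: "0 \<notin> R"
    using rs unfolding root_system_def by auto
  have a0: "a \<noteq> 0" using aRR z by auto
  have p1: "pairing a (H a) = 2" using rs_two[OF rs aRR] .
  have p2: "pairing a \<psi> = 2" unfolding psi a_def using refl_inv_rs[OF rs bR] rs_two[OF rs aR] by simp
  have r1: "\<forall>\<gamma>\<in>R. \<gamma> - pairing \<gamma> (H a) *s a \<in> R"
    using refl_mem[OF rs aRR] unfolding reflection_def by blast
  have r2: "\<forall>\<gamma>\<in>R. \<gamma> - pairing \<gamma> \<psi> *s a \<in> R"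
  proof
    fix \<gamma> assume gR: "\<gamma> \<in> R"
    have "reflection H \<beta> (reflection H \<alpha> (reflection H \<beta> \<gamma>)) = \<gamma> - pairing \<gamma> \<psi> *s a"
      unfolding psi a_def
      by (subst reflection_def[of H \<alpha>], subst refl_lin, simp add: refl_inv_rs[OF rs bR])
    moreover have "reflection H \<beta> (reflection H \<alpha> (reflection H \<beta> \<gamma>)) \<in> R"
      using refl_mem[OF rs] aR bR gR by blast
    ultimately show "\<gamma> - pairing \<gamma> \<psi> *s a \<in> R" by simp
  qed
  have "pairing \<xi> (H a) = pairing \<xi> \<psi>"
    by (rule refl_unique[OF fin span a0 p1 p2 r1 r2])
  then show ?thesis unfolding psi a_def .
qed

lemma coroot_neg:
  fixes R :: "('f::field_char_0 ^ 'n) set"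
  assumes rs: "root_system R H" and bR: "\<beta> \<in> R"
  shows "pairing \<xi> (H (- \<beta>)) = - pairing \<xi> (H \<beta>)"
proof -
  have "reflection H \<beta> \<beta> = - \<beta>"
    using rs_two[OF rs bR] by (simp add: reflection_def vec_eq_iff)
  then have "pairing \<xi> (H (- \<beta>)) = pairing (reflection H \<beta> \<xi>) (H \<beta>)"
    using coroot_refl[OF rs bR bR] by metis
  then show ?thesis using rs_two[OF rs bR] by (simp add: refl_pairing)
qed

lemma weyl_props:
  fixes R :: "('f::field_char_0 ^ 'n) set"
  assumes w: "w \<in> weyl_group R H" and rs: "root_system R H"
  shows "(\<forall>\<alpha>\<in>R. w \<alpha> \<in> R) \<and> (\<forall>\<alpha>\<in>R. \<forall>\<xi>. pairing (w \<xi>) (H (w \<alpha>)) = pairing \<xi> (H \<alpha>)) \<and> bij w"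
  using w
proof (induction rule: weyl_group.induct)
  case weyl_id
  then show ?case by (simp add: bij_def inj_on_def)
next
  case (weyl_step w \<beta>)
  let ?s = "reflection H \<beta>"
  have inv: "?s (?s x) = x" for x using refl_inv_rs[OF rs weyl_step.hyps(2)] .
  have "bij ?s" by (rule o_bij[of ?s]) (auto simp: inv)
  then have b: "bij (?s \<circ> w)" using weyl_step.IH bij_comp by blast
  have m: "\<forall>\<alpha>\<in>R. (?s \<circ> w) \<alpha> \<in> R" using weyl_step refl_mem[OF rs] by auto
  have "pairing ((?s \<circ> w) \<xi>) (H ((?s \<circ> w) \<alpha>)) = pairing \<xi> (H \<alpha>)" if aR: "\<alpha> \<in> R" for \<alpha> \<xi>
  proof -
    have waR: "w \<alpha> \<in> R" using weyl_step.IH aR by blast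
    have "pairing (?s (w \<xi>)) (H (?s (w \<alpha>))) = pairing (?s (?s (w \<xi>))) (H (w \<alpha>))"
      by (rule coroot_refl[OF rs waR weyl_step.hyps(2)])
    also have "\<dots> = pairing \<xi> (H \<alpha>)" using inv weyl_step.IH aR by simp
    finally show ?thesis by simp
  qed
  then show ?case using b m by blast
qed



definition posc :: "('f::field ^ 'n) set \<Rightarrow> 'f ^ 'n \<Rightarrow> bool" where
  "posc D \<alpha> \<longleftrightarrow> (\<exists>c :: 'f ^ 'n \<Rightarrow> nat. \<alpha> = (\<Sum>\<delta>\<in>D. of_nat (c \<delta>) *s \<delta>))"

locale psys =
  fixes R Rp D :: "('f::field_char_0 ^ 'n) set" and H :: "'f ^ 'n \<Rightarrow> 'f ^ 'n"
  assumes rs: "root_system R H"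
    and DR: "D \<subseteq> R"
    and indep: "\<forall>c. (\<Sum>\<delta>\<in>D. c \<delta> *s \<delta>) = 0 \<longrightarrow> (\<forall>\<delta>\<in>D. c \<delta> = 0)"
    and cover: "\<forall>\<alpha>\<in>R. \<exists>c :: 'f ^ 'n \<Rightarrow> nat.
            \<alpha> = (\<Sum>\<delta>\<in>D. of_nat (c \<delta>) *s \<delta>) \<or> \<alpha> = - (\<Sum>\<delta>\<in>D. of_nat (c \<delta>) *s \<delta>)"
    and Rp: "Rp = {\<alpha>\<in>R. \<exists>c :: 'f ^ 'n \<Rightarrow> nat. \<alpha> = (\<Sum>\<delta>\<in>D. of_nat (c \<delta>) *s \<delta>)}"
begin

lemma finR: "finite R" using rs unfolding root_system_def by blast
lemma zR: "0 \<notin> R" using rs unfolding root_system_def by blast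
lemma RpR: "Rp \<subseteq> R" using Rp by blast
lemma finRp: "finite Rp" using finite_subset[OF RpR finR] .

lemma negR: "\<alpha> \<in> R \<Longrightarrow> - \<alpha> \<in> R"
proof -
  assume a: "\<alpha> \<in> R"
  have "reflection H \<alpha> \<alpha> = - \<alpha>"
    using rs_two[OF rs a] by (simp add: reflection_def vec_eq_iff)
  then show ?thesis using refl_mem[OF rs a a] by simp
qed

lemma P1: assumes "\<alpha> \<in> R" "\<alpha> \<notin> Rp" shows "- \<alpha> \<in> Rp"
proof -
  obtain c :: "'f ^ 'n \<Rightarrow> nat" where
    c: "\<alpha> = (\<Sum>\<delta>\<in>D. of_nat (c \<delta>) *s \<delta>) \<or> \<alpha> = - (\<Sum>\<delta>\<in>D. of_nat (c \<delta>) *s \<delta>)"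
    using cover assms(1) by blast
  have "\<alpha> \<noteq> (\<Sum>\<delta>\<in>D. of_nat (c \<delta>) *s \<delta>)" using assms Rp by blast
  then have "- \<alpha> = (\<Sum>\<delta>\<in>D. of_nat (c \<delta>) *s \<delta>)" using c by simp
  then show ?thesis using negR[OF assms(1)] Rp by blast
qed

lemma P2: assumes "\<beta> \<in> Rp" shows "- \<beta> \<notin> Rp"
proof
  assume "- \<beta> \<in> Rp"
  then obtain c' :: "'f ^ 'n \<Rightarrow> nat" where c': "- \<beta> = (\<Sum>\<delta>\<in>D. of_nat (c' \<delta>) *s \<delta>)"
    using Rp by blast
  obtain c :: "'f ^ 'n \<Rightarrow> nat" where c: "\<beta> = (\<Sum>\<delta>\<in>D. of_nat (c \<delta>) *s \<delta>)"
    using Rp assms by blast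
  have "(\<Sum>\<delta>\<in>D. (of_nat (c \<delta> + c' \<delta>) :: 'f) *s \<delta>) = \<beta> + - \<beta>"
    unfolding c' unfolding c by (simp add: sum.distrib[symmetric] vector_sadd_rdistrib)
  also have "\<dots> = 0" by simp
  finally have "\<forall>\<delta>\<in>D. (of_nat (c \<delta> + c' \<delta>) :: 'f) = 0"
    using indep[rule_format, of "\<lambda>\<delta>. of_nat (c \<delta> + c' \<delta>)"] by blast
  then have "\<forall>\<delta>\<in>D. c \<delta> = 0" by (auto simp del: of_nat_add)
  then have "\<beta> = 0" unfolding c by simp
  then show False using assms RpR zR by blast
qed

lemma rho_pos:
  assumes gRp: "\<gamma> \<in> Rp"
  shows "\<exists>a b :: nat. a > 0 \<and> b > 0 \<and> pairing (rho Rp) (H \<gamma>) * of_nat b = of_nat a"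
proof -
  have gR: "\<gamma> \<in> R" using gRp RpR by blast
  define s where "s = reflection H \<gamma>"
  have inv: "s (s x) = x" for x unfolding s_def using refl_inv_rs[OF rs gR] .
  have sR: "x \<in> R \<Longrightarrow> s x \<in> R" for x unfolding s_def using refl_mem[OF rs gR] .
  have sneg: "s (- x) = - s x" for x unfolding s_def
    by (simp add: reflection_def pairing_neg_left vec_eq_iff)
  define A where "A = {\<beta>\<in>Rp. s \<beta> \<in> Rp}"
  define B where "B = {\<beta>\<in>Rp. s \<beta> \<notin> Rp}"
  have finA: "finite A" and finB: "finite B" using finRp by (auto simp: A_def B_def)
  have RpAB: "Rp = A \<union> B" and disj: "A \<inter> B = {}" by (auto simp: A_def B_def)
  define X where "X = (\<Sum>\<beta>\<in>Rp. pairing \<beta> (H \<gamma>))"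
  have e1: "(\<Sum>\<beta>\<in>Rp. s \<beta>) = (\<Sum>\<beta>\<in>Rp. \<beta>) - X *s \<gamma>"
    unfolding s_def reflection_def X_def by (simp add: sum_subtractf sum_smult_left)
  have e2: "(\<Sum>\<beta>\<in>Rp. f \<beta>) = (\<Sum>\<beta>\<in>A. f \<beta>) + (\<Sum>\<beta>\<in>B. f \<beta>)" for f :: "_ \<Rightarrow> 'f ^ 'n"
    unfolding RpAB using sum.union_disjoint[OF finA finB disj] .
  have e3: "(\<Sum>\<beta>\<in>A. s \<beta>) = (\<Sum>\<beta>\<in>A. \<beta>)"
    by (rule sum.reindex_bij_witness[of _ s s]) (auto simp: A_def inv)
  have w1: "- s (- s b) = b" for b by (simp add: sneg inv)
  have w2: "- s b \<in> B" if b: "b \<in> B" for b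
  proof -
    have bR: "b \<in> R" using b RpR B_def by auto
    show ?thesis using P1[OF sR[OF bR]] b P2[of b] by (auto simp: B_def sneg inv)
  qed
  have e4: "(\<Sum>\<beta>\<in>B. - s \<beta>) = (\<Sum>\<beta>\<in>B. \<beta>)"
    by (rule sum.reindex_bij_witness[of _ "\<lambda>x. - s x" "\<lambda>x. - s x"]) (use w1 w2 in auto)
  have e5: "(\<Sum>\<beta>\<in>B. s \<beta>) = - (\<Sum>\<beta>\<in>B. \<beta>)"
  proof -
    have "(\<Sum>\<beta>\<in>B. s \<beta>) = - (\<Sum>\<beta>\<in>B. - s \<beta>)" by (simp add: sum_negf)
    then show ?thesis using e4 by simp
  qed
  have e6: "X *s \<gamma> = (\<Sum>\<beta>\<in>B. \<beta>) + (\<Sum>\<beta>\<in>B. \<beta>)"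
    using e1 e2[of s] e2[of "\<lambda>x. x"] e3 e5 by (simp add: algebra_simps)
  define x where "x = pairing (rho Rp) (H \<gamma>)"
  have Xx: "X = 2 * x" unfolding x_def X_def rho_def
    by (simp add: pairing_scale_left pairing_sum_left)
  have e7: "x *s \<gamma> = (\<Sum>\<beta>\<in>B. \<beta>)"
  proof -
    have "\<forall>i. 2 * x * \<gamma> $ i = 2 * (\<Sum>\<beta>\<in>B. \<beta>) $ i"
      using e6 unfolding Xx by (simp add: vec_eq_iff)
    then show ?thesis by (simp add: vec_eq_iff)
  qed
  have "\<forall>\<beta>\<in>Rp. \<exists>c :: 'f ^ 'n \<Rightarrow> nat. \<beta> = (\<Sum>\<delta>\<in>D. of_nat (c \<delta>) *s \<delta>)" using Rp by blast
  then obtain c where c: "\<forall>\<beta>\<in>Rp. \<beta> = (\<Sum>\<delta>\<in>D. of_nat (c \<beta> \<delta>) *s \<delta>)" by metis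
  define N where "N \<delta> = (\<Sum>\<beta>\<in>B. c \<beta> \<delta>)" for \<delta>
  have e8: "(\<Sum>\<beta>\<in>B. \<beta>) = (\<Sum>\<delta>\<in>D. of_nat (N \<delta>) *s \<delta>)"
  proof -
    have "(\<Sum>\<beta>\<in>B. \<beta>) = (\<Sum>\<beta>\<in>B. \<Sum>\<delta>\<in>D. of_nat (c \<beta> \<delta>) *s \<delta>)"
      by (rule sum.cong) (use c B_def in auto)
    also have "\<dots> = (\<Sum>\<delta>\<in>D. \<Sum>\<beta>\<in>B. of_nat (c \<beta> \<delta>) *s \<delta>)" by (rule sum.swap)
    also have "\<dots> = (\<Sum>\<delta>\<in>D. of_nat (N \<delta>) *s \<delta>)"
      unfolding N_def by (simp add: sum_smult_left)
    finally show ?thesis .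
  qed
  have e9: "x *s \<gamma> = (\<Sum>\<delta>\<in>D. (x * of_nat (c \<gamma> \<delta>)) *s \<delta>)"
    using c gRp by (simp add: vec_eq_iff sum_distrib_left mult.assoc)
  have "(\<Sum>\<delta>\<in>D. (x * of_nat (c \<gamma> \<delta>) - of_nat (N \<delta>)) *s \<delta>) = 0"
    using e7 e8 e9 by (simp add: vector_sub_rdistrib sum_subtractf)
  then have coef: "\<forall>\<delta>\<in>D. x * of_nat (c \<gamma> \<delta>) - of_nat (N \<delta>) = 0"
    using indep[rule_format, of "\<lambda>\<delta>. x * of_nat (c \<gamma> \<delta>) - of_nat (N \<delta>)"] by blast
  obtain \<delta>0 where d0: "\<delta>0 \<in> D" "c \<gamma> \<delta>0 \<noteq> 0"
  proof (rule ccontr)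
    assume "\<not> thesis"
    then have "\<forall>\<delta>\<in>D. c \<gamma> \<delta> = 0" using that by blast
    then have z: "(\<Sum>\<delta>\<in>D. of_nat (c \<gamma> \<delta>) *s \<delta>) = (0::'f^'n)"
      by (intro sum.neutral) simp
    have "\<gamma> = (\<Sum>\<delta>\<in>D. of_nat (c \<gamma> \<delta>) *s \<delta>)" using c gRp by blast
    then have "\<gamma> = 0" using z by simp
    then show False using gR zR by blast
  qed
  have gB: "\<gamma> \<in> B"
  proof -
    have "s \<gamma> = - \<gamma>" unfolding s_def using rs_two[OF rs gR] by (simp add: reflection_def vec_eq_iff)
    then show ?thesis using P2[OF gRp] gRp by (simp add: B_def)
  qed
  have "c \<gamma> \<delta>0 \<le> N \<delta>0" unfolding N_def using member_le_sum[OF gB _ finB, of "\<lambda>\<beta>. c \<beta> \<delta>0"] by simp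
  then show ?thesis using coef d0 unfolding x_def
    by (intro exI[of _ "N \<delta>0"] exI[of _ "c \<gamma> \<delta>0"]) auto
qed

end



lemma final_arith:
  fixes x1 x2 :: "'f::field_char_0"
  assumes eq: "of_nat k + of_nat m + x1 + x2 = 0"
    and h1: "x1 * of_nat b1 = of_nat a1" and h2: "x2 * of_nat b2 = of_nat a2"
    and pos: "a1 > 0" "b1 > 0" "b2 > 0"
  shows False
proof -
  have "(of_nat ((k + m) * b1 * b2 + a1 * b2 + a2 * b1) :: 'f)
        = (of_nat k + of_nat m + x1 + x2) * of_nat b1 * of_nat b2"
    by (simp add: h1[symmetric] h2[symmetric] algebra_simps)
  also have "\<dots> = 0" using eq by simp
  finally have "(k + m) * b1 * b2 + a1 * b2 + a2 * b1 = 0" by (simp only: of_nat_eq_0_iff)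
  then show False using pos by simp
qed

theorem mainTheorem14:
  fixes R Rp :: "('f::field_char_0 ^ 'n) set"
    and H :: "'f ^ 'n \<Rightarrow> 'f ^ 'n"
    and w :: "'f ^ 'n \<Rightarrow> 'f ^ 'n"
    and \<Omega> :: "('f ^ 'n \<Rightarrow> 'f) set"
  assumes "algebraically_closed TYPE('f)"
    and "root_system R H"
    and "positive_system R Rp"
    and "w \<in> weyl_group R H"
    and "prime_ideal_S \<Omega>"
    and "prime_ideal_S (dot_set Rp w \<Omega>)"
    and "dominant_integral Rp H \<inter> zero_set \<Omega> \<noteq> {}"
    and "dominant_integral Rp H \<inter> zero_set (dot_set Rp w \<Omega>) \<noteq> {}"
  shows "w \<in> W_lambda R Rp H \<Omega>"
proof -
  note rs = assms(2)
  obtain D where D: "D \<subseteq> R"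
    "\<forall>c. (\<Sum>\<delta>\<in>D. c \<delta> *s \<delta>) = 0 \<longrightarrow> (\<forall>\<delta>\<in>D. c \<delta> = 0)"
    "\<forall>\<alpha>\<in>R. \<exists>c :: 'f ^ 'n \<Rightarrow> nat.
            \<alpha> = (\<Sum>\<delta>\<in>D. of_nat (c \<delta>) *s \<delta>) \<or> \<alpha> = - (\<Sum>\<delta>\<in>D. of_nat (c \<delta>) *s \<delta>)"
    "Rp = {\<alpha>\<in>R. \<exists>c :: 'f ^ 'n \<Rightarrow> nat. \<alpha> = (\<Sum>\<delta>\<in>D. of_nat (c \<delta>) *s \<delta>)}"
    using assms(3) unfolding positive_system_def by blast
  interpret P: psys R Rp D H using rs D by unfold_locales
  have WP: "(\<forall>\<alpha>\<in>R. w \<alpha> \<in> R) \<and> (\<forall>\<alpha>\<in>R. \<forall>\<xi>. pairing (w \<xi>) (H (w \<alpha>)) = pairing \<xi> (H \<alpha>)) \<and> bij w"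
    using weyl_props[OF assms(4) rs] .
  obtain \<mu> where mu: "\<mu> \<in> dominant_integral Rp H" "\<mu> \<in> zero_set \<Omega>" using assms(7) by blast
  obtain \<nu> where nu: "\<nu> \<in> dominant_integral Rp H" "\<nu> \<in> zero_set (dot_set Rp w \<Omega>)" using assms(8) by blast
  define \<xi> where "\<xi> = dot Rp (inv w) \<nu>"
  have xiZ: "f \<xi> = 0" if f: "f \<in> \<Omega>" for f
  proof -
    have "dot_fun Rp w f \<in> dot_set Rp w \<Omega>" using f by (simp add: dot_set_def)
    then have "dot_fun Rp w f \<nu> = 0" using nu(2) by (simp add: zero_set_def)
    then show ?thesis by (simp add: dot_fun_def \<xi>_def)
  qed
  have wxi: "w (\<xi> + rho Rp) = \<nu> + rho Rp"
    unfolding \<xi>_def dot_def using WP by (simp add: bij_is_surj surj_f_inv_f)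
  have "w \<alpha> \<in> Rp" if aB: "\<alpha> \<in> B_lambda R Rp H \<Omega>" for \<alpha>
  proof (rule ccontr)
    assume nwa: "w \<alpha> \<notin> Rp"
    have aRp: "\<alpha> \<in> Rp" and aI: "\<alpha> \<in> integral_roots R H \<Omega>"
      using aB by (auto simp: B_lambda_def simple_roots_def)
    have aR: "\<alpha> \<in> R" using aRp P.RpR by blast
    obtain n :: int where n: "(\<lambda>\<xi>. pairing \<xi> (H \<alpha>) - of_int n) \<in> \<Omega>"
      using aI by (auto simp: integral_roots_def)
    have "pairing \<mu> (H \<alpha>) - of_int n = 0" using mu(2) n unfolding zero_set_def by fastforce
    moreover obtain k :: nat where k: "pairing \<mu> (H \<alpha>) = of_nat k"
      using mu(1) aRp unfolding dominant_integral_def by blast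
    moreover have "pairing \<xi> (H \<alpha>) - of_int n = 0" using xiZ[OF n] by simp
    ultimately have xik: "pairing \<xi> (H \<alpha>) = of_nat k" by simp
    have waR: "w \<alpha> \<in> R" using WP aR by blast
    define \<beta> where "\<beta> = - w \<alpha>"
    have bRp: "\<beta> \<in> Rp" unfolding \<beta>_def using P.P1[OF waR nwa] .
    have bR: "\<beta> \<in> R" using bRp P.RpR by blast
    have wab: "w \<alpha> = - \<beta>" unfolding \<beta>_def by simp
    obtain m :: nat where m: "pairing \<nu> (H \<beta>) = of_nat m"
      using nu(1) bRp unfolding dominant_integral_def by blast
    have "pairing (\<nu> + rho Rp) (H (w \<alpha>)) = pairing (\<xi> + rho Rp) (H \<alpha>)"
      using WP aR wxi by metis
    then have "- (pairing \<nu> (H \<beta>) + pairing (rho Rp) (H \<beta>)) = of_nat k + pairing (rho Rp) (H \<alpha>)"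
      unfolding wab coroot_neg[OF rs bR] by (simp add: pairing_add_left xik)
    then have "of_nat k + pairing (rho Rp) (H \<alpha>) + (pairing \<nu> (H \<beta>) + pairing (rho Rp) (H \<beta>)) = 0"
      using eq_neg_iff_add_eq_0 by metis
    then have eq: "of_nat k + of_nat m + pairing (rho Rp) (H \<alpha>) + pairing (rho Rp) (H \<beta>) = (0::'f)"
      unfolding m by (simp only: ac_simps)
    obtain a1 b1 :: nat where 1: "a1 > 0" "b1 > 0" "pairing (rho Rp) (H \<alpha>) * of_nat b1 = of_nat a1"
      using P.rho_pos[OF aRp] by blast
    obtain a2 b2 :: nat where 2: "a2 > 0" "b2 > 0" "pairing (rho Rp) (H \<beta>) * of_nat b2 = of_nat a2"
      using P.rho_pos[OF bRp] by blast
    show False using final_arith[OF eq 1(3) 2(3) 1(1) 1(2) 2(2)] .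
  qed
  then show ?thesis unfolding W_lambda_def using assms(4) by blast
qed


end
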